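(* There is an integer $n_0\ge 3$ such that every connected graph $H$ with $n\ge n_0$ vertices has geometric pebbling threshold at most $$\frac{2^{\sqrt{2\log_2 n}}\, e}{2\sqrt{\log_2 n}}\left(1-(\log_2 n)^{-1/4}\right)^{-1} n.$$
   Context: Pebbling: a distribution on a graph assigns a nonnegative integer number of pebbles to each vertex. A pebbling move removes two pebbles from a vertex having at least two pebbles and adds one pebble to an adjacent vertex. A vertex is pebblable if some sequence of pebbling moves from the distribution ends with at least one pebble on it; a distribution is solvable if every vertex is pebblable. The geometric distribution on $\{0,1,2,\dots\}$ with parameter $0<p\le 1$ assigns probability $p(1-p)^k$ to $k$. For a graph $H$ with $n>0$ vertices, the geometric pebbling threshold of $H$ is the unique positive real $x$ such that, if an independent geometrically distributed number of pebbles with parameter $(1+x/n)^{-1}$ is placed on each vertex of $H$, the probability that the distribution is solvable equals $\tfrac12$. *)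

theory Defs
  imports "HOL-Probability.Probability"
begin

definition simple_graph :: "nat set \<Rightarrow> (nat \<Rightarrow> nat \<Rightarrow> bool) \<Rightarrow> bool" where
  "simple_graph V E \<longleftrightarrow> finite V \<and> (\<forall>u v. E u v \<longrightarrow> u \<in> V \<and> v \<in> V)
     \<and> (\<forall>u v. E u v \<longrightarrow> E v u) \<and> (\<forall>v. \<not> E v v)"

definition connected_graph :: "nat set \<Rightarrow> (nat \<Rightarrow> nat \<Rightarrow> bool) \<Rightarrow> bool" where
  "connected_graph V E \<longleftrightarrow> (\<forall>u\<in>V. \<forall>v\<in>V. E\<^sup>*\<^sup>* u v)"

definition pebbling_move ::
  "(nat \<Rightarrow> nat \<Rightarrow> bool) \<Rightarrow> (nat \<Rightarrow> nat) \<Rightarrow> (nat \<Rightarrow> nat) \<Rightarrow> bool" where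
  "pebbling_move E D D' \<longleftrightarrow> (\<exists>v u. E v u \<and> D v \<ge> 2 \<and>
      D' = (D(v := D v - 2))(u := D u + 1))"

definition pebblable :: "(nat \<Rightarrow> nat \<Rightarrow> bool) \<Rightarrow> (nat \<Rightarrow> nat) \<Rightarrow> nat \<Rightarrow> bool" where
  "pebblable E D r \<longleftrightarrow> (\<exists>D'. (pebbling_move E)\<^sup>*\<^sup>* D D' \<and> D' r \<ge> 1)"

definition solvable :: "nat set \<Rightarrow> (nat \<Rightarrow> nat \<Rightarrow> bool) \<Rightarrow> (nat \<Rightarrow> nat) \<Rightarrow> bool" where
  "solvable V E D \<longleftrightarrow> (\<forall>r\<in>V. pebblable E D r)"

definition solv_prob :: "nat set \<Rightarrow> (nat \<Rightarrow> nat \<Rightarrow> bool) \<Rightarrow> real \<Rightarrow> real" where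
  "solv_prob V E p = measure_pmf.prob (Pi_pmf V 0 (\<lambda>_. geometric_pmf p)) {D. solvable V E D}"

definition geom_threshold :: "nat set \<Rightarrow> (nat \<Rightarrow> nat \<Rightarrow> bool) \<Rightarrow> real" where
  "geom_threshold V E = (THE x. x > 0 \<and>
      solv_prob V E (inverse (1 + x / real (card V))) = 1/2)"

end

theory Submission
  imports Defs "HOL-Real_Asymp.Real_Asymp"
begin


lemma move_mono:
  assumes "pebbling_move E D D2" "\<And>x. D x \<le> D' x"
  shows "\<exists>D2'. pebbling_move E D' D2' \<and> (\<forall>x. D2 x \<le> D2' x)"
proof -
  from assms(1) obtain v u where vu: "E v u" "D v \<ge> 2" "D2 = (D(v := D v - 2))(u := D u + 1)"
    unfolding pebbling_move_def by blast
  define D2' where "D2' = (D'(v := D' v - 2))(u := D' u + 1)"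
  have "pebbling_move E D' D2'" unfolding pebbling_move_def D2'_def
    using vu assms(2)[of v] by (intro exI[of _ v] exI[of _ u]) auto
  moreover have "\<forall>x. D2 x \<le> D2' x" using assms(2) vu(3) unfolding D2'_def
    by (auto simp: diff_le_mono)
  ultimately show ?thesis by blast
qed

lemma moves_mono:
  assumes "(pebbling_move E)\<^sup>*\<^sup>* D D2" "\<And>x. D x \<le> D' x"
  shows "\<exists>D2'. (pebbling_move E)\<^sup>*\<^sup>* D' D2' \<and> (\<forall>x. D2 x \<le> D2' x)"
  using assms(1)
proof (induction rule: rtranclp_induct)
  case base then show ?case using assms(2) by auto
next
  case (step y z)
  then obtain y' where "(pebbling_move E)\<^sup>*\<^sup>* D' y'" "\<forall>x. y x \<le> y' x" by blast
  with move_mono[OF step(2), of y'] show ?case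
    by (meson rtranclp.rtrancl_into_rtrancl)
qed

lemma pebblable_mono:
  assumes "pebblable E D r" "\<And>x. D x \<le> D' x"
  shows "pebblable E D' r"
  using assms moves_mono unfolding pebblable_def by (meson le_trans)

lemma solvable_mono:
  assumes "solvable V E D" "\<And>x. D x \<le> D' x"
  shows "solvable V E D'"
  using assms pebblable_mono unfolding solvable_def by blast

lemma many_moves:
  assumes "E v u" "v \<noteq> u" "D v \<ge> 2 * c"
  shows "(pebbling_move E)\<^sup>*\<^sup>* D ((D(v := D v - 2 * c))(u := D u + c))"
  using assms(3)
proof (induction c)
  case 0 then show ?case by (simp add: fun_upd_idem)
next
  case (Suc c)
  let ?D1 = "(D(v := D v - 2 * c))(u := D u + c)"
  have "(pebbling_move E)\<^sup>*\<^sup>* D ?D1" using Suc.prems by (intro Suc.IH) simp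
  moreover have "pebbling_move E ?D1 ((D(v := D v - 2 * Suc c))(u := D u + Suc c))"
    unfolding pebbling_move_def using assms Suc.prems
    by (intro exI[of _ v] exI[of _ u]) (auto simp: fun_eq_iff)
  ultimately show ?case by (meson rtranclp.rtrancl_into_rtrancl)
qed

definition chain :: "(nat \<Rightarrow> nat \<Rightarrow> bool) \<Rightarrow> nat list \<Rightarrow> bool" where
  "chain E us \<longleftrightarrow> (\<forall>j. Suc j < length us \<longrightarrow> E (us ! Suc j) (us ! j))"

lemma chain_take: "chain E us \<Longrightarrow> chain E (take k us)"
  unfolding chain_def by auto

lemma path_lemma:
  assumes "length us = Suc k" "distinct us" "chain E us"
    "(\<Sum>j\<le>k. D (us ! j) * 2 ^ (k - j)) \<ge> 2 ^ k"
  shows "pebblable E D (us ! 0)"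
  using assms
proof (induction k arbitrary: us D)
  case 0
  then show ?case unfolding pebblable_def by auto
next
  case (Suc k)
  define a where "a = us ! Suc k"
  define b where "b = us ! k"
  define c where "c = D a div 2"
  define D' where "D' = (D(a := D a - 2 * c))(b := D b + c)"
  have ab: "a \<noteq> b" using Suc.prems unfolding a_def b_def by (simp add: nth_eq_iff_index_eq)
  have E: "E a b" using Suc.prems unfolding chain_def a_def b_def by auto
  have mv: "(pebbling_move E)\<^sup>*\<^sup>* D D'" unfolding D'_def
    by (rule many_moves[where E=E and v=a and u=b and c=c and D=D, OF E ab]) (simp add: c_def)
  let ?us = "take (Suc k) us"
  have len: "length ?us = Suc k" using Suc.prems by simp
  have D'j: "D' (us ! j) = D (us ! j) + (if j = k then c else 0)" if "j \<le> k" for j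
  proof -
    have "us ! j \<noteq> a" using Suc.prems that unfolding a_def by (simp add: nth_eq_iff_index_eq)
    moreover have "j \<noteq> k \<Longrightarrow> us ! j \<noteq> b" using Suc.prems that unfolding b_def by (simp add: nth_eq_iff_index_eq)
    ultimately show ?thesis using that unfolding D'_def b_def by auto
  qed
  have "(\<Sum>j\<le>k. D' (?us ! j) * 2 ^ (k - j)) = (\<Sum>j\<le>k. D (us ! j) * 2 ^ (k - j)) + c"
  proof -
    have "(\<Sum>j\<le>k. D' (?us ! j) * 2 ^ (k - j)) = (\<Sum>j\<le>k. D (us ! j) * 2 ^ (k - j) + (if j = k then c else 0))"
      by (intro sum.cong) (auto simp: D'j)
    also have "\<dots> = (\<Sum>j\<le>k. D (us ! j) * 2 ^ (k - j)) + c"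
      by (simp add: sum.distrib)
    finally show ?thesis .
  qed
  moreover have "(\<Sum>j\<le>Suc k. D (us ! j) * 2 ^ (Suc k - j)) = 2 * (\<Sum>j\<le>k. D (us ! j) * 2 ^ (k - j)) + D a"
    by (simp add: a_def sum_distrib_left Suc_diff_le algebra_simps)
  ultimately have "(\<Sum>j\<le>k. D' (?us ! j) * 2 ^ (k - j)) \<ge> 2 ^ k"
    using Suc.prems(4) unfolding c_def by simp
  then have "pebblable E D' (?us ! 0)"
    using Suc.IH[of ?us D'] len Suc.prems by (simp add: chain_take)
  then show ?case using mv unfolding pebblable_def by (auto intro: rtranclp_trans)
qed



lemma simple_path:
  assumes G: "simple_graph V E" and r: "r \<in> V" and "E\<^sup>*\<^sup>* r v"
  shows "\<exists>us. distinct us \<and> us \<noteq> [] \<and> us ! 0 = r \<and> last us = v \<and> chain E us \<and> set us \<subseteq> V"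
  using assms(3)
proof (induction rule: rtranclp_induct)
  case base
  show ?case using r by (intro exI[of _ "[r]"]) (auto simp: chain_def)
next
  case (step w v)
  then obtain us where us: "distinct us" "us \<noteq> []" "us ! 0 = r" "last us = w" "chain E us" "set us \<subseteq> V"
    by blast
  have vV: "v \<in> V" using G step(2) unfolding simple_graph_def by blast
  show ?case
  proof (cases "v \<in> set us")
    case True
    then obtain i where i: "i < length us" "us ! i = v" by (auto simp: in_set_conv_nth)
    have tk: "take (Suc i) us = take i us @ [us ! i]" using i by (simp add: take_Suc_conv_app_nth)
    have "distinct (take (Suc i) us)" using us(1) by simp
    moreover have "take (Suc i) us \<noteq> []" by (simp add: tk)
    moreover have "take (Suc i) us ! 0 = r" using us(3) by simp
    moreover have "last (take (Suc i) us) = v" using i by (simp add: tk)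
    moreover have "chain E (take (Suc i) us)" using us(5) by (rule chain_take)
    moreover have "set (take (Suc i) us) \<subseteq> V" by (rule order_trans[OF set_take_subset us(6)])
    ultimately show ?thesis by blast
  next
    case False
    have "chain E (us @ [v])"
      unfolding chain_def
    proof (intro allI impI)
      fix j assume j: "Suc j < length (us @ [v])"
      show "E ((us @ [v]) ! Suc j) ((us @ [v]) ! j)"
      proof (cases "Suc j < length us")
        case True then show ?thesis using us(5) by (auto simp: chain_def nth_append)
      next
        case False
        then have "Suc j = length us" using j by simp
        moreover have "E v w" using G step(2) unfolding simple_graph_def by blast
        moreover have "us ! j = w" using us(2,4) \<open>Suc j = length us\<close>
          by (metis diff_Suc_1 last_conv_nth)
        ultimately show ?thesis by (auto simp: nth_append)
      qed
    qed
    moreover have "distinct (us @ [v])" using us(1) False by simp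
    moreover have "(us @ [v]) ! 0 = r" using us(2,3) by (simp add: nth_append)
    moreover have "set (us @ [v]) \<subseteq> V" using us(6) vV by simp
    moreover have "last (us @ [v]) = v" by simp
    moreover have "us @ [v] \<noteq> []" by simp
    ultimately show ?thesis by blast
  qed
qed

lemma single_vertex:
  assumes "length us = Suc k" "distinct us" "chain E us" "D (us ! k) \<ge> 2 ^ k"
  shows "pebblable E D (us ! 0)"
proof (rule path_lemma[OF assms(1-3)])
  have "D (us ! k) * 2 ^ (k - k) \<le> (\<Sum>j\<le>k. D (us ! j) * 2 ^ (k - j))"
    by (rule member_le_sum) auto
  then show "2 ^ k \<le> (\<Sum>j\<le>k. D (us ! j) * 2 ^ (k - j))" using assms(4) by simp
qed

definition mpath :: "(nat \<Rightarrow> nat \<Rightarrow> bool) \<Rightarrow> nat set \<Rightarrow> nat \<Rightarrow> nat \<Rightarrow> nat list \<Rightarrow> bool" where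
  "mpath E V m r us \<longleftrightarrow> distinct us \<and> length us = m \<and> us ! 0 = r \<and> chain E us \<and> set us \<subseteq> V"

lemma case_path:
  assumes "mpath E V m r us" "\<not> pebblable E D r" "m \<ge> 1"
  shows "(\<Sum>j<m. D (us ! j) * 2 ^ (m - 1 - j)) < 2 ^ (m - 1)"
proof -
  obtain k where k: "m = Suc k" using assms(3) by (cases m) auto
  have "{..<m} = {..k}" using k by auto
  moreover have "\<not> (\<Sum>j\<le>k. D (us ! j) * 2 ^ (k - j)) \<ge> 2 ^ k"
    using assms path_lemma[of us k E D] k unfolding mpath_def by auto
  ultimately show ?thesis using k by (simp add: not_le)
qed

lemma case_nopath:
  assumes G: "simple_graph V E" "connected_graph V E" and r: "r \<in> V" and v: "v \<in> V"
    and np: "\<not> (\<exists>us. mpath E V m r us)" and m: "m \<ge> 2" and Dv: "D v \<ge> 2 ^ (m - 2)"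
  shows "pebblable E D r"
proof -
  obtain us where us: "distinct us" "us \<noteq> []" "us ! 0 = r" "last us = v" "chain E us" "set us \<subseteq> V"
    using simple_path[OF G(1) r, of v] G(2) r v unfolding connected_graph_def by blast
  obtain k where k: "length us = Suc k" using us(2) by (cases "length us") auto
  have "k \<le> m - 2"
  proof (rule ccontr)
    assume "\<not> k \<le> m - 2"
    then have "m \<le> length us" using k m by simp
    then have "mpath E V m r (take m us)" using us m unfolding mpath_def
      by (auto simp: chain_take distinct_take dest: in_set_takeD)
    then show False using np by blast
  qed
  have "us ! k = v" using us(2,4) k by (simp add: last_conv_nth)
  moreover have "(2::nat) ^ k \<le> 2 ^ (m - 2)" using \<open>k \<le> m - 2\<close> by (simp add: power_increasing)
  ultimately have Dk: "D (us ! k) \<ge> 2 ^ k" using Dv by (metis order_trans)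
  have "pebblable E D (us ! 0)" by (rule single_vertex[of us k E D, OF k us(1) us(5) Dk])
  then show ?thesis using us(3) by simp
qed

lemma big_vertex:
  assumes G: "simple_graph V E" "connected_graph V E" and r: "r \<in> V" and v: "v \<in> V"
    and Dv: "D v \<ge> 2 ^ card V"
  shows "pebblable E D r"
proof -
  obtain us where us: "distinct us" "us \<noteq> []" "us ! 0 = r" "last us = v" "chain E us" "set us \<subseteq> V"
    using simple_path[OF G(1) r, of v] G(2) r v unfolding connected_graph_def by blast
  obtain k where k: "length us = Suc k" using us(2) by (cases "length us") auto
  have "finite V" using G(1) unfolding simple_graph_def by blast
  then have "card (set us) \<le> card V" using us(6) by (rule card_mono)
  then have "length us \<le> card V" using us(1) by (simp add: distinct_card)
  then have "k \<le> card V" using k by simp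
  have "us ! k = v" using us(2,4) k by (simp add: last_conv_nth)
  moreover have "(2::nat) ^ k \<le> 2 ^ card V" using \<open>k \<le> card V\<close> by (simp add: power_increasing)
  ultimately have Dk: "D (us ! k) \<ge> 2 ^ k" using Dv by (metis order_trans)
  have "pebblable E D (us ! 0)" by (rule single_vertex[of us k E D, OF k us(1) us(5) Dk])
  then show ?thesis using us(3) by simp
qed



definition tot :: "nat set \<Rightarrow> (nat \<Rightarrow> nat) \<Rightarrow> nat" where
  "tot V D = (\<Sum>v\<in>V. D v)"

definition gpoly :: "nat set \<Rightarrow> (nat \<Rightarrow> nat) set \<Rightarrow> real \<Rightarrow> real" where
  "gpoly V F s = (\<Sum>D\<in>F. (1 - s) ^ card V * s ^ tot V D)"

lemma key_ineq:
  fixes s :: real and F :: "(nat \<Rightarrow> nat) set"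
  assumes V: "finite V" "v0 \<in> V" and F: "finite F" "F \<subseteq> {D. \<forall>x. x \<notin> V \<longrightarrow> D x = 0}" "D1 \<in> F"
    and down: "\<And>D v. D \<in> F \<Longrightarrow> v \<in> V \<Longrightarrow> D v \<ge> 1 \<Longrightarrow> D(v := D v - 1) \<in> F"
    and s: "s > 0"
  shows "(\<Sum>D\<in>F. real (tot V D) * s ^ tot V D) < (\<Sum>D\<in>F. real (tot V D + card V) * s ^ (tot V D + 1))"
proof -
  define h where "h v D = real (D v + 1) * s ^ (tot V D + 1)" for v D
  define G where "G v = {D\<in>F. D(v := D v + 1) \<in> F}" for v
  have tot_upd: "tot V (D(v := D v + 1)) = tot V D + 1" if "v \<in> V" for D v
  proof -
    have "tot V (D(v := D v + 1)) = (\<Sum>x\<in>V. D x + (if x = v then 1 else 0))"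
      unfolding tot_def by (intro sum.cong) auto
    also have "\<dots> = tot V D + 1" using that V unfolding tot_def by (simp add: sum.distrib)
    finally show ?thesis .
  qed
  have step: "(\<Sum>D\<in>{D\<in>F. D v \<ge> 1}. real (D v) * s ^ tot V D) = (\<Sum>D\<in>G v. h v D)" if v: "v \<in> V" for v
  proof -
    have bij: "bij_betw (\<lambda>D. D(v := D v + 1)) (G v) {D\<in>F. D v \<ge> 1}"
    proof (rule bij_betwI[where g = "\<lambda>D. D(v := D v - 1)"])
      show "(\<lambda>D. D(v := D v + 1)) \<in> G v \<rightarrow> {D \<in> F. 1 \<le> D v}" unfolding G_def by auto
      show "(\<lambda>D. D(v := D v - 1)) \<in> {D \<in> F. 1 \<le> D v} \<rightarrow> G v"
        unfolding G_def using down v by (auto simp: fun_upd_idem)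
      show "D(v := D v + 1, v := (D(v := D v + 1)) v - 1) = D" for D :: "nat \<Rightarrow> nat" by (simp add: fun_eq_iff)
      show "D(v := D v - 1, v := (D(v := D v - 1)) v + 1) = D" if "D \<in> {D \<in> F. 1 \<le> D v}" for D :: "nat \<Rightarrow> nat"
        using that by (auto simp: fun_eq_iff)
    qed
    have "(\<Sum>D\<in>{D\<in>F. D v \<ge> 1}. real (D v) * s ^ tot V D)
        = (\<Sum>D\<in>G v. real ((D(v := D v + 1)) v) * s ^ tot V (D(v := D v + 1)))"
      by (rule sum.reindex_bij_betw[OF bij, symmetric])
    also have "\<dots> = (\<Sum>D\<in>G v. h v D)"
      using tot_upd[OF v, simplified] by (intro sum.cong) (auto simp: h_def)
    finally show ?thesis .
  qed
  have le: "(\<Sum>D\<in>G v. h v D) \<le> (\<Sum>D\<in>F. h v D)" for v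
    by (rule sum_mono2) (use F s in \<open>auto simp: G_def h_def\<close>)
  obtain D0 where D0: "D0 \<in> F" "\<forall>D\<in>F. D v0 \<le> D0 v0"
  proof -
    have "Max ((\<lambda>D. D v0) ` F) \<in> (\<lambda>D. D v0) ` F" using F by (intro Max_in) auto
    then obtain D0 where "D0 \<in> F" "D0 v0 = Max ((\<lambda>D. D v0) ` F)" by auto
    moreover have "\<forall>D\<in>F. D v0 \<le> Max ((\<lambda>D. D v0) ` F)" using F by auto
    ultimately show ?thesis using that by auto
  qed
  have "D0 \<notin> G v0" using D0 unfolding G_def by fastforce
  have lt: "(\<Sum>D\<in>G v0. h v0 D) < (\<Sum>D\<in>F. h v0 D)"
  proof -
    have GF: "G v0 \<subseteq> F" unfolding G_def by auto
    have "(\<Sum>D\<in>F. h v0 D) = (\<Sum>D\<in>G v0. h v0 D) + (\<Sum>D\<in>F - G v0. h v0 D)"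
      using F(1) GF by (metis add.commute sum.subset_diff)
    moreover have "h v0 D0 \<le> (\<Sum>D\<in>F - G v0. h v0 D)"
      by (rule member_le_sum) (use F s D0 \<open>D0 \<notin> G v0\<close> in \<open>auto simp: h_def\<close>)
    moreover have "h v0 D0 > 0" using s unfolding h_def by simp
    ultimately show ?thesis by linarith
  qed
  have "(\<Sum>D\<in>F. real (tot V D) * s ^ tot V D) = (\<Sum>D\<in>F. \<Sum>v\<in>V. real (D v) * s ^ tot V D)"
    unfolding tot_def by (simp add: sum_distrib_right)
  also have "\<dots> = (\<Sum>v\<in>V. \<Sum>D\<in>F. real (D v) * s ^ tot V D)" by (rule sum.swap)
  also have "\<dots> = (\<Sum>v\<in>V. \<Sum>D\<in>{D\<in>F. D v \<ge> 1}. real (D v) * s ^ tot V D)"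
    by (intro sum.cong refl sum.mono_neutral_right) (use F in auto)
  also have "\<dots> = (\<Sum>v\<in>V. \<Sum>D\<in>G v. h v D)" by (intro sum.cong refl step)
  also have "\<dots> < (\<Sum>v\<in>V. \<Sum>D\<in>F. h v D)"
    by (rule sum_strict_mono_ex1) (use V le lt in auto)
  also have "\<dots> = (\<Sum>D\<in>F. \<Sum>v\<in>V. h v D)" by (rule sum.swap)
  also have "\<dots> = (\<Sum>D\<in>F. real (tot V D + card V) * s ^ (tot V D + 1))"
  proof (intro sum.cong refl)
    fix D assume "D \<in> F"
    have "(\<Sum>v\<in>V. h v D) = (\<Sum>v\<in>V. real (D v + 1)) * s ^ (tot V D + 1)"
      unfolding h_def by (rule sum_distrib_right[symmetric])
    also have "(\<Sum>v\<in>V. real (D v + 1)) = real (tot V D + card V)"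
      unfolding tot_def by (simp add: sum.distrib)
    finally show "(\<Sum>v\<in>V. h v D) = real (tot V D + card V) * s ^ (tot V D + 1)" .
  qed
  finally show ?thesis .
qed

lemma term_deriv:
  "((\<lambda>s::real. (1 - s) ^ n * s ^ k) has_real_derivative
     (- (real n * (1 - x) ^ (n - 1)) * x ^ k + (1 - x) ^ n * (real k * x ^ (k - 1)))) (at x)"
  by (auto intro!: derivative_eq_intros simp: algebra_simps)

lemma term_deriv_mult:
  fixes x :: real assumes "n \<ge> 1"
  shows "x * (- (real n * (1 - x) ^ (n - 1)) * x ^ k + (1 - x) ^ n * (real k * x ^ (k - 1)))
     = (1 - x) ^ (n - 1) * (real k * x ^ k - real (k + n) * x ^ (k + 1))"
proof -
  have a: "(1 - x) ^ n = (1 - x) * (1 - x) ^ (n - 1)" using assms by (metis Suc_diff_le diff_Suc_1 power_Suc)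
  have b: "x * x ^ (k - 1) = x ^ k" if "k \<ge> 1" using that by (metis Suc_diff_le diff_Suc_1 power_Suc)
  have b': "real k * (x * x ^ (k - 1)) = real k * x ^ k" by (cases k) auto
  define c where "c = (1 - x) ^ (n - 1)"
  have "x * (- (real n * c) * x ^ k + ((1 - x) * c) * (real k * x ^ (k - 1)))
      = - (real n * c) * x ^ (k + 1) + (1 - x) * c * (real k * (x * x ^ (k - 1)))"
    by (simp add: algebra_simps)
  also have "\<dots> = c * (real k * x ^ k - real (k + n) * x ^ (k + 1))"
    unfolding b' by (simp add: algebra_simps)
  finally show ?thesis unfolding a c_def .
qed

lemma gpoly_strict:
  fixes F :: "(nat \<Rightarrow> nat) set"
  assumes V: "finite V" "v0 \<in> V" and F: "finite F" "F \<subseteq> {D. \<forall>x. x \<notin> V \<longrightarrow> D x = 0}" "D1 \<in> F"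
    and down: "\<And>D v. D \<in> F \<Longrightarrow> v \<in> V \<Longrightarrow> D v \<ge> 1 \<Longrightarrow> D(v := D v - 1) \<in> F"
    and ab: "0 \<le> a" "a < b" "b \<le> 1"
  shows "gpoly V F b < gpoly V F a"
proof (rule DERIV_neg_imp_decreasing_open[OF ab(2)])
  show "continuous_on {a..b} (gpoly V F)" unfolding gpoly_def by (intro continuous_intros)
  fix x :: real assume x: "a < x" "x < b"
  let ?n = "card V"
  have n1: "?n \<ge> 1" using V by (metis One_nat_def Suc_leI card_gt_0_iff empty_iff)
  define y where "y = (\<Sum>D\<in>F. - (real ?n * (1 - x) ^ (?n - 1)) * x ^ tot V D + (1 - x) ^ ?n * (real (tot V D) * x ^ (tot V D - 1)))"
  have "DERIV (gpoly V F) x :> y" unfolding gpoly_def y_def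
    by (intro DERIV_sum term_deriv)
  moreover have "y < 0"
  proof -
    have x01: "0 < x" "x < 1" using x ab by auto
    have "x * y = (1 - x) ^ (?n - 1) * ((\<Sum>D\<in>F. real (tot V D) * x ^ tot V D) - (\<Sum>D\<in>F. real (tot V D + ?n) * x ^ (tot V D + 1)))"
    proof -
      have "x * y = (\<Sum>D\<in>F. (1 - x) ^ (?n - 1) * (real (tot V D) * x ^ tot V D - real (tot V D + ?n) * x ^ (tot V D + 1)))"
        unfolding y_def sum_distrib_left term_deriv_mult[OF n1] ..
      also have "\<dots> = (1 - x) ^ (?n - 1) * ((\<Sum>D\<in>F. real (tot V D) * x ^ tot V D) - (\<Sum>D\<in>F. real (tot V D + ?n) * x ^ (tot V D + 1)))"
        by (simp only: sum_distrib_left[symmetric] sum_subtractf)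
      finally show ?thesis .
    qed
    moreover have "(\<Sum>D\<in>F. real (tot V D) * x ^ tot V D) - (\<Sum>D\<in>F. real (tot V D + ?n) * x ^ (tot V D + 1)) < 0"
      using key_ineq[OF V F down x01(1)] by simp
    moreover have "(1 - x) ^ (?n - 1) > 0" using x01 by simp
    ultimately have "x * y < 0" by (simp add: mult_pos_neg)
    then show ?thesis using x01 by (simp add: mult_less_0_iff)
  qed
  ultimately show "\<exists>y. DERIV (gpoly V F) x :> y \<and> y < 0" by blast
qed



definition Fset :: "nat set \<Rightarrow> (nat \<Rightarrow> nat \<Rightarrow> bool) \<Rightarrow> (nat \<Rightarrow> nat) set" where
  "Fset V E = {D. (\<forall>x. x \<notin> V \<longrightarrow> D x = 0) \<and> \<not> solvable V E D}"

lemma Fset_finite: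
  assumes G: "simple_graph V E" "connected_graph V E"
  shows "finite (Fset V E)"
proof -
  have fV: "finite V" using G(1) unfolding simple_graph_def by blast
  have "Fset V E \<subseteq> PiE_dflt V 0 (\<lambda>_. {..<(2::nat) ^ card V})"
  proof
    fix D assume D: "D \<in> Fset V E"
    have "D v < 2 ^ card V" if v: "v \<in> V" for v
    proof (rule ccontr)
      assume "\<not> D v < 2 ^ card V"
      then have "solvable V E D" unfolding solvable_def using big_vertex[OF G _ v] by force
      then show False using D unfolding Fset_def by blast
    qed
    then show "D \<in> PiE_dflt V 0 (\<lambda>_. {..<(2::nat) ^ card V})" using D unfolding Fset_def PiE_dflt_def by auto
  qed
  moreover have "finite (PiE_dflt V 0 (\<lambda>_. {..<(2::nat) ^ card V}))" using fV by (intro finite_PiE_dflt) auto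
  ultimately show ?thesis by (rule finite_subset)
qed

lemma zero_moves: "(pebbling_move E)\<^sup>*\<^sup>* (\<lambda>_. 0) D \<Longrightarrow> D = (\<lambda>_. 0)"
  by (induction rule: rtranclp_induct) (auto simp: pebbling_move_def)

lemma zero_in_Fset: "V \<noteq> {} \<Longrightarrow> (\<lambda>_. 0) \<in> Fset V E"
  unfolding Fset_def solvable_def pebblable_def using zero_moves by fastforce

lemma Fset_down:
  assumes "D \<in> Fset V E" "v \<in> V" "D v \<ge> 1"
  shows "D(v := D v - 1) \<in> Fset V E"
proof -
  have "\<not> solvable V E (D(v := D v - 1))"
  proof
    assume "solvable V E (D(v := D v - 1))"
    then have "solvable V E D" by (rule solvable_mono) auto
    then show False using assms unfolding Fset_def by blast
  qed
  then show ?thesis using assms unfolding Fset_def by auto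
qed

lemma solv_prob_gpoly:
  assumes G: "simple_graph V E" "connected_graph V E" and q: "0 < q" "q \<le> 1"
  shows "solv_prob V E q = 1 - gpoly V (Fset V E) (1 - q)"
proof -
  define M where "M = Pi_pmf V 0 (\<lambda>_. geometric_pmf q)"
  have fV: "finite V" using G(1) unfolding simple_graph_def by blast
  have setM: "set_pmf M \<subseteq> {D. \<forall>x. x \<notin> V \<longrightarrow> D x = 0}" unfolding M_def by (rule set_Pi_pmf_subset[OF fV])
  have "measure_pmf.prob M {D. solvable V E D} = 1 - measure_pmf.prob M (UNIV - {D. solvable V E D})"
    using measure_pmf.prob_compl[of "{D. solvable V E D}" M] by simp
  also have "measure_pmf.prob M (UNIV - {D. solvable V E D}) = measure_pmf.prob M ((UNIV - {D. solvable V E D}) \<inter> set_pmf M)"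
    by (rule measure_Int_set_pmf[symmetric])
  also have "(UNIV - {D. solvable V E D}) \<inter> set_pmf M = Fset V E \<inter> set_pmf M"
    using setM unfolding Fset_def by auto
  also have "measure_pmf.prob M (Fset V E \<inter> set_pmf M) = measure_pmf.prob M (Fset V E)"
    by (rule measure_Int_set_pmf)
  also have "\<dots> = (\<Sum>D\<in>Fset V E. pmf M D)" by (rule measure_measure_pmf_finite[OF Fset_finite[OF G]])
  also have "\<dots> = gpoly V (Fset V E) (1 - q)"
    unfolding gpoly_def
  proof (intro sum.cong refl)
    fix D assume D: "D \<in> Fset V E"
    have "pmf M D = (\<Prod>v\<in>V. (1 - q) ^ D v * q)"
      unfolding M_def using D q by (subst pmf_Pi[OF fV]) (auto simp: Fset_def)
    also have "\<dots> = (1 - q) ^ tot V D * q ^ card V"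
      unfolding tot_def by (simp add: prod.distrib power_sum)
    finally show "pmf M D = (1 - (1 - q)) ^ card V * (1 - q) ^ tot V D" by simp
  qed
  finally show ?thesis unfolding solv_prob_def M_def .
qed



lemma geom_nn_integral:
  fixes q z :: real
  assumes q: "0 < q" "q \<le> 1" and z: "0 \<le> z" "z \<le> 1"
  shows "(\<integral>\<^sup>+ k. ennreal (z ^ k) \<partial>measure_pmf (geometric_pmf q)) = ennreal (q / (1 - (1 - q) * z))"
proof -
  have "(1 - q) * z \<le> 1 - q" using q z by (intro mult_left_le) auto
  then have lt: "(1 - q) * z < 1" using q by linarith
  have nn: "0 \<le> (1 - q) * z" using q z by simp
  have s: "(\<lambda>k. q * ((1 - q) * z) ^ k) sums (q * (1 / (1 - (1 - q) * z)))"
    by (intro sums_mult geometric_sums) (use lt nn in simp)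
  have "(\<integral>\<^sup>+ k. ennreal (z ^ k) \<partial>measure_pmf (geometric_pmf q)) =
        (\<integral>\<^sup>+ k. ennreal (pmf (geometric_pmf q) k) * ennreal (z ^ k) \<partial>count_space UNIV)"
    by (rule nn_integral_measure_pmf)
  also have "\<dots> = (\<Sum>k. ennreal (pmf (geometric_pmf q) k) * ennreal (z ^ k))"
    by (rule nn_integral_count_space_nat)
  also have "\<dots> = (\<Sum>k. ennreal (q * ((1 - q) * z) ^ k))"
    using q z by (intro suminf_cong) (simp add: ennreal_mult'[symmetric] power_mult_distrib mult_ac)
  also have "\<dots> = ennreal (q * (1 / (1 - (1 - q) * z)))"
    by (rule suminf_ennreal_eq[OF _ s]) (use q nn in simp)
  finally show ?thesis by simp
qed

lemma inv_bound:
  fixes c :: real assumes "c > 0"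
  shows "1 / (1 - exp (- c)) \<le> 1 + 1 / c"
proof -
  have e: "exp (- c) < 1" using assms by simp
  have "(c + 1) * exp (- c) \<le> 1"
  proof -
    have "c + 1 \<le> exp c" using exp_ge_add_one_self[of c] by linarith
    then have "(c + 1) * exp (- c) \<le> exp c * exp (- c)" by (simp add: mult_right_mono)
    then show ?thesis by (simp add: exp_minus)
  qed
  then have "c \<le> (c + 1) * (1 - exp (- c))" by (simp add: algebra_simps)
  then have "1 \<le> (1 + 1 / c) * (1 - exp (- c))" using assms by (simp add: field_simps)
  then show ?thesis using e by (simp add: field_simps)
qed

lemma factor_bound:
  fixes q c :: real assumes q: "0 < q" "q \<le> 1" and c: "c > 0"
  shows "q / (1 - (1 - q) * exp (- c)) \<le> q * (1 + 1 / c)"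
proof -
  have e: "exp (- c) < 1" "0 < exp (-c)" using c by auto
  have "1 - exp (- c) \<le> 1 - (1 - q) * exp (- c)" using q e by (simp add: mult_left_le_one_le)
  then have "q / (1 - (1 - q) * exp (- c)) \<le> q / (1 - exp (- c))"
  proof -
    have p1: "0 < 1 - exp (- c)" using e by simp
    have p2: "0 < 1 - (1 - q) * exp (- c)" using \<open>1 - exp (- c) \<le> 1 - (1 - q) * exp (- c)\<close> p1 by linarith
    show ?thesis
      by (rule divide_left_mono[OF \<open>1 - exp (- c) \<le> 1 - (1 - q) * exp (- c)\<close>]) (use q in simp, rule mult_pos_pos[OF p2 p1])
  qed
  also have "\<dots> = q * (1 / (1 - exp (- c)))" by simp
  also have "\<dots> \<le> q * (1 + 1 / c)" using inv_bound[OF c] q by (intro mult_left_mono) auto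
  finally show ?thesis .
qed

lemma chernoff_path:
  fixes us :: "nat list" and q :: real and m :: nat
  assumes fV: "finite V" and us: "distinct us" "length us = m" "set us \<subseteq> V"
    and q: "0 < q" "q \<le> 1" and m: "m \<ge> 1"
  shows "measure_pmf.prob (Pi_pmf V 0 (\<lambda>_. geometric_pmf q))
           {D. (\<Sum>j<m. D (us ! j) * 2 ^ (m - 1 - j)) < (2::nat) ^ (m - 1)}
         \<le> exp (real m) * (\<Prod>j<m. q * (1 + 2 ^ j / m))"
proof -
  define M where "M = Pi_pmf V 0 (\<lambda>_. geometric_pmf q)"
  define B where "B = {D. (\<Sum>j<m. D (us ! j) * 2 ^ (m - 1 - j)) < (2::nat) ^ (m - 1)}"
  define w where "w x = (\<Sum>j<m. if us ! j = x then 1 / 2 ^ j else (0::real))" for x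
  define z where "z x = exp (- (real m * w x))" for x
  define G where "G x = q / (1 - (1 - q) * z x)" for x
  have w_nn: "w x \<ge> 0" for x unfolding w_def by (intro sum_nonneg) auto
  have z01: "0 \<le> z x" "z x \<le> 1" for x unfolding z_def using w_nn[of x] by auto
  have Gnn: "G x \<ge> 0" for x
  proof -
    have "(1 - q) * z x \<le> 1 - q" using q z01[of x] by (intro mult_left_le) auto
    then show ?thesis unfolding G_def using q by simp
  qed
  have usV: "us ! j \<in> V" if "j < m" for j using us that by auto
  have wsum: "(\<Sum>x\<in>V. w x * real (D x)) = (\<Sum>j<m. real (D (us ! j)) / 2 ^ j)" for D
  proof -
    have "(\<Sum>x\<in>V. w x * real (D x)) = (\<Sum>x\<in>V. \<Sum>j<m. if us ! j = x then real (D x) / 2 ^ j else 0)"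
      unfolding w_def sum_distrib_right by (intro sum.cong refl) auto
    also have "\<dots> = (\<Sum>j<m. \<Sum>x\<in>V. if us ! j = x then real (D x) / 2 ^ j else 0)" by (rule sum.swap)
    also have "\<dots> = (\<Sum>j<m. real (D (us ! j)) / 2 ^ j)"
      using fV usV by (intro sum.cong refl) (simp add: sum.delta)
    finally show ?thesis .
  qed
  have prodz: "(\<Prod>x\<in>V. z x ^ D x) = exp (- real m * (\<Sum>j<m. real (D (us ! j)) / 2 ^ j))" for D
  proof -
    have "(\<Prod>x\<in>V. z x ^ D x) = (\<Prod>x\<in>V. exp (- real m * (w x * real (D x))))"
      unfolding z_def by (intro prod.cong refl) (simp add: exp_of_nat_mult[symmetric] mult_ac)
    also have "\<dots> = exp (\<Sum>x\<in>V. - real m * (w x * real (D x)))" by (simp add: exp_sum fV)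
    also have "\<dots> = exp (- real m * (\<Sum>x\<in>V. w x * real (D x)))" by (simp add: sum_distrib_left)
    finally show ?thesis unfolding wsum .
  qed
  have pw: "indicator B D \<le> ennreal (exp (real m)) * (\<Prod>x\<in>V. ennreal (z x ^ D x))" for D
  proof (cases "D \<in> B")
    case True
    let ?X = "(\<Sum>j<m. real (D (us ! j)) / 2 ^ j)"
    have "(\<Sum>j<m. D (us ! j) * 2 ^ (m - 1 - j)) < (2::nat) ^ (m - 1)" using True unfolding B_def by simp
    then have "real (\<Sum>j<m. D (us ! j) * 2 ^ (m - 1 - j)) < real ((2::nat) ^ (m - 1))" by (simp only: of_nat_less_iff)
    then have lt: "real (\<Sum>j<m. D (us ! j) * 2 ^ (m - 1 - j)) < 2 ^ (m - 1)" by simp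
    have "real (\<Sum>j<m. D (us ! j) * 2 ^ (m - 1 - j)) = (\<Sum>j<m. 2 ^ (m - 1) * (real (D (us ! j)) / 2 ^ j))"
      unfolding of_nat_sum
    proof (intro sum.cong refl)
      fix j assume "j \<in> {..<m}"
      then have "(2::real) ^ (m - 1 - j) * 2 ^ j = 2 ^ (m - 1)" by (simp flip: power_add)
      then show "real (D (us ! j) * 2 ^ (m - 1 - j)) = 2 ^ (m - 1) * (real (D (us ! j)) / 2 ^ j)"
        by (simp add: field_simps)
    qed
    also have "\<dots> = 2 ^ (m - 1) * ?X" by (simp add: sum_distrib_left)
    finally have "2 ^ (m - 1) * ?X < 2 ^ (m - 1) * 1" using lt by simp
    then have "?X < 1" by (simp only: mult_less_cancel_left_pos zero_less_power zero_less_numeral)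
    then have "1 \<le> exp (real m * (1 - ?X))" using m by simp
    also have "\<dots> = exp (real m) * exp (- real m * ?X)" by (simp add: algebra_simps exp_diff exp_minus field_simps)
    finally have "1 \<le> exp (real m) * (\<Prod>x\<in>V. z x ^ D x)" unfolding prodz .
    then have "(1::ennreal) \<le> ennreal (exp (real m) * (\<Prod>x\<in>V. z x ^ D x))" by simp
    also have "\<dots> = ennreal (exp (real m)) * (\<Prod>x\<in>V. ennreal (z x ^ D x))"
      using z01 by (simp add: ennreal_mult' prod_ennreal prod_nonneg)
    finally show ?thesis using True by simp
  qed simp
  have "emeasure (measure_pmf M) B = (\<integral>\<^sup>+ D. indicator B D \<partial>measure_pmf M)" by simp
  also have "\<dots> \<le> (\<integral>\<^sup>+ D. ennreal (exp (real m)) * (\<Prod>x\<in>V. ennreal (z x ^ D x)) \<partial>measure_pmf M)"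
    by (intro nn_integral_mono pw)
  also have "\<dots> = ennreal (exp (real m)) * (\<integral>\<^sup>+ D. (\<Prod>x\<in>V. ennreal (z x ^ D x)) \<partial>measure_pmf M)"
    by (rule nn_integral_cmult) simp
  also have "(\<integral>\<^sup>+ D. (\<Prod>x\<in>V. ennreal (z x ^ D x)) \<partial>measure_pmf M) = (\<Prod>x\<in>V. \<integral>\<^sup>+ k. ennreal (z x ^ k) \<partial>measure_pmf (geometric_pmf q))"
    unfolding M_def by (rule nn_integral_prod_Pi_pmf[OF fV])
  also have "\<dots> = (\<Prod>x\<in>V. ennreal (G x))"
    unfolding G_def using q z01 by (intro prod.cong refl geom_nn_integral) auto
  also have "ennreal (exp (real m)) * \<dots> = ennreal (exp (real m) * (\<Prod>x\<in>V. G x))"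
    using Gnn by (simp add: ennreal_mult' prod_ennreal prod_nonneg)
  finally have "emeasure (measure_pmf M) B \<le> ennreal (exp (real m) * (\<Prod>x\<in>V. G x))" .
  then have P1: "measure_pmf.prob M B \<le> exp (real m) * (\<Prod>x\<in>V. G x)"
    using Gnn by (simp add: measure_pmf.emeasure_eq_measure prod_nonneg)
  have "(\<Prod>x\<in>V. G x) = (\<Prod>x\<in>set us. G x)"
  proof (rule prod.mono_neutral_right[OF fV us(3)])
    show "\<forall>x\<in>V - set us. G x = 1"
    proof
      fix x assume "x \<in> V - set us"
      then have "w x = 0" unfolding w_def using us by (intro sum.neutral) (auto simp: nth_mem)
      then show "G x = 1" unfolding G_def z_def using q by simp
    qed
  qed
  also have "\<dots> = (\<Prod>j<m. G (us ! j))"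
    by (rule prod.reindex_bij_betw[symmetric], rule bij_betw_nth) (use us in auto)
  also have "\<dots> \<le> (\<Prod>j<m. q * (1 + 2 ^ j / m))"
  proof (rule prod_mono)
    fix j assume j: "j \<in> {..<m}"
    have "w (us ! j) = 1 / 2 ^ j"
    proof -
      have "w (us ! j) = (\<Sum>i<m. if i = j then 1 / 2 ^ i else (0::real))"
        unfolding w_def using us j by (intro sum.cong refl) (auto simp: nth_eq_iff_index_eq)
      also have "\<dots> = 1 / 2 ^ j" using j by (simp add: sum.delta)
      finally show ?thesis .
    qed
    then have "G (us ! j) = q / (1 - (1 - q) * exp (- (real m / 2 ^ j)))" unfolding G_def z_def by simp
    also have "\<dots> \<le> q * (1 + 1 / (real m / 2 ^ j))" using m q by (intro factor_bound) auto
    also have "\<dots> = q * (1 + 2 ^ j / m)" by simp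
    finally have "G (us ! j) \<le> q * (1 + 2 ^ j / m)" .
    moreover have "0 \<le> G (us ! j)"
    proof -
      have "(1 - q) * z (us ! j) \<le> 1 - q" using q z01 by (intro mult_left_le) auto
      then show ?thesis unfolding G_def using q by simp
    qed
    ultimately show "0 \<le> G (us ! j) \<and> G (us ! j) \<le> q * (1 + 2 ^ j / m)" by simp
  qed
  finally show ?thesis using P1 unfolding M_def B_def
    by (smt (verit) exp_gt_zero mult_left_mono)
qed



lemma geom_lessThan:
  assumes q: "0 < q" "q \<le> 1"
  shows "measure_pmf.prob (geometric_pmf q) {..<K} = 1 - (1 - q) ^ K"
proof -
  have "measure_pmf.prob (geometric_pmf q) {..<K} = (\<Sum>k<K. (1 - q) ^ k * q)"
    using q by (simp add: measure_measure_pmf_finite)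
  also have "\<dots> = q * (\<Sum>k<K. (1 - q) ^ k)" by (simp add: sum_distrib_left mult_ac)
  also have "\<dots> = 1 - (1 - q) ^ K" using q by (simp add: sum_gp_strict)
  finally show ?thesis .
qed

lemma fail_bound:
  assumes G: "simple_graph V E" "connected_graph V E" and q: "0 < q" "q \<le> 1" and m: "m \<ge> 2"
  shows "1 - solv_prob V E q \<le> (1 - (1 - q) ^ (2 ^ (m - 2))) ^ card V
           + real (card V) * (exp (real m) * (\<Prod>j<m. q * (1 + 2 ^ j / m)))"
proof -
  define M where "M = Pi_pmf V 0 (\<lambda>_. geometric_pmf q)"
  have fV: "finite V" using G(1) unfolding simple_graph_def by blast
  define K :: nat where "K = 2 ^ (m - 2)"
  define A where "A = Pi V (\<lambda>_. {..<K})"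
  define R where "R = {r\<in>V. \<exists>us. mpath E V m r us}"
  define p where "p r = (SOME us. mpath E V m r us)" for r
  define B where "B (us :: nat list) = {D :: nat \<Rightarrow> nat. (\<Sum>j<m. D (us ! j) * 2 ^ (m - 1 - j)) < (2::nat) ^ (m - 1)}" for us
  define \<beta> where "\<beta> = exp (real m) * (\<Prod>j<m. q * (1 + 2 ^ j / m))"
  have pR: "mpath E V m r (p r)" if "r \<in> R" for r
    using that unfolding R_def p_def by (auto intro: someI_ex)
  have setM: "set_pmf M \<subseteq> {D. \<forall>x. x \<notin> V \<longrightarrow> D x = 0}" unfolding M_def by (rule set_Pi_pmf_subset[OF fV])
  have sub: "(UNIV - {D. solvable V E D}) \<inter> set_pmf M \<subseteq> A \<union> (\<Union>r\<in>R. B (p r))"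
  proof
    fix D assume D: "D \<in> (UNIV - {D. solvable V E D}) \<inter> set_pmf M"
    then obtain r where r: "r \<in> V" "\<not> pebblable E D r" unfolding solvable_def by auto
    show "D \<in> A \<union> (\<Union>r\<in>R. B (p r))"
    proof (cases "r \<in> R")
      case True
      have "D \<in> B (p r)" unfolding B_def using case_path[OF pR[OF True] r(2)] m by simp
      then show ?thesis using True by blast
    next
      case False
      then have np: "\<not> (\<exists>us. mpath E V m r us)" using r unfolding R_def by blast
      have "D v < K" if "v \<in> V" for v
        using case_nopath[OF G r(1) that np m] r(2) unfolding K_def by (meson not_le)
      then show ?thesis unfolding A_def by blast
    qed
  qed
  have "1 - solv_prob V E q = measure_pmf.prob M (UNIV - {D. solvable V E D})"
    unfolding solv_prob_def M_def using measure_pmf.prob_compl[of "{D. solvable V E D}"] by simp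
  also have "\<dots> = measure_pmf.prob M ((UNIV - {D. solvable V E D}) \<inter> set_pmf M)"
    by (rule measure_Int_set_pmf[symmetric])
  also have "\<dots> \<le> measure_pmf.prob M (A \<union> (\<Union>r\<in>R. B (p r)))"
    by (rule measure_pmf.finite_measure_mono[OF sub]) simp
  also have "\<dots> \<le> measure_pmf.prob M A + measure_pmf.prob M (\<Union>r\<in>R. B (p r))"
    by (rule measure_Un_le) simp_all
  also have "measure_pmf.prob M (\<Union>r\<in>R. B (p r)) \<le> (\<Sum>r\<in>R. measure_pmf.prob M (B (p r)))"
    by (rule measure_pmf.finite_measure_subadditive_finite) (use fV in \<open>auto simp: R_def\<close>)
  also have "\<dots> \<le> (\<Sum>r\<in>R. \<beta>)"
  proof (rule sum_mono)
    fix r assume "r \<in> R"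
    from pR[OF this] have "distinct (p r)" "length (p r) = m" "set (p r) \<subseteq> V" unfolding mpath_def by auto
    from chernoff_path[OF fV this q] m show "measure_pmf.prob M (B (p r)) \<le> \<beta>"
      unfolding M_def B_def \<beta>_def by simp
  qed
  also have "\<dots> \<le> real (card V) * \<beta>"
  proof -
    have "card R \<le> card V" using fV unfolding R_def by (intro card_mono) auto
    moreover have "\<beta> \<ge> 0" unfolding \<beta>_def using q by (intro mult_nonneg_nonneg prod_nonneg) auto
    ultimately show ?thesis by (simp add: mult_right_mono)
  qed
  also have "measure_pmf.prob M A = (1 - (1 - q) ^ K) ^ card V"
    unfolding M_def A_def using fV q by (simp add: measure_Pi_pmf_Pi geom_lessThan)
  finally show ?thesis unfolding \<beta>_def K_def by simp
qed



lemma threshold_le: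
  assumes G: "simple_graph V E" "connected_graph V E" and V: "V \<noteq> {}" and Bp: "b > 0"
    and half: "solv_prob V E (inverse (1 + b / real (card V))) \<ge> 1/2"
  shows "geom_threshold V E \<le> b"
proof -
  have fV: "finite V" using G(1) unfolding simple_graph_def by blast
  define n where "n = real (card V)"
  have n: "n > 0" unfolding n_def using fV V by (simp add: card_gt_0_iff)
  obtain v0 where v0: "v0 \<in> V" using V by blast
  define F where "F = Fset V E"
  have F: "finite F" "F \<subseteq> {D. \<forall>x. x \<notin> V \<longrightarrow> D x = 0}" "(\<lambda>_. 0) \<in> F"
    unfolding F_def using Fset_finite[OF G] zero_in_Fset[OF V] by (auto simp: Fset_def)
  have down: "\<And>D v. D \<in> F \<Longrightarrow> v \<in> V \<Longrightarrow> D v \<ge> 1 \<Longrightarrow> D(v := D v - 1) \<in> F"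
    unfolding F_def by (rule Fset_down)
  define \<sigma> where "\<sigma> x = 1 - inverse (1 + x / n)" for x :: real
  define \<psi> where "\<psi> x = 1 - gpoly V F (\<sigma> x)" for x
  have q: "0 < inverse (1 + x / n)" "inverse (1 + x / n) \<le> 1" if "x \<ge> 0" for x
    using that n by (auto simp: field_simps)
  have phi: "solv_prob V E (inverse (1 + x / n)) = \<psi> x" if "x \<ge> 0" for x
    unfolding \<psi>_def \<sigma>_def F_def using solv_prob_gpoly[OF G q[OF that]] .
  have \<sigma>01: "0 \<le> \<sigma> x" "\<sigma> x \<le> 1" if "x \<ge> 0" for x
    using q[OF that] unfolding \<sigma>_def by auto
  have \<sigma>mono: "\<sigma> x < \<sigma> y" if "0 \<le> x" "x < y" for x y
  proof -
    have "1 + x / n < 1 + y / n" using that n by (simp add: divide_strict_right_mono)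
    moreover have "0 < 1 + x / n" using that n by (simp add: add_pos_nonneg)
    ultimately have "inverse (1 + y / n) < inverse (1 + x / n)" by (simp add: less_imp_inverse_less)
    then show ?thesis unfolding \<sigma>_def by simp
  qed
  have \<psi>mono: "\<psi> x < \<psi> y" if "0 \<le> x" "x < y" for x y
  proof -
    have "gpoly V F (\<sigma> y) < gpoly V F (\<sigma> x)"
      by (rule gpoly_strict[OF fV v0 F down]) (use \<sigma>01 \<sigma>mono that in auto)
    then show ?thesis unfolding \<psi>_def by simp
  qed
  have \<psi>0: "\<psi> 0 \<le> 0"
  proof -
    have "\<sigma> 0 = 0" unfolding \<sigma>_def by simp
    moreover have "(1 - 0) ^ card V * (0::real) ^ tot V (\<lambda>_. 0) \<le> gpoly V F 0"
      unfolding gpoly_def by (rule member_le_sum) (use F in auto)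
    ultimately show ?thesis unfolding \<psi>_def tot_def by simp
  qed
  have cont: "continuous_on {0..b} \<psi>"
  proof -
    have "continuous_on {0..b} \<sigma>" unfolding \<sigma>_def using n
      by (intro continuous_intros) (auto simp: field_simps add_pos_nonneg)
    moreover have "continuous_on UNIV (gpoly V F)" unfolding gpoly_def by (intro continuous_intros)
    ultimately show ?thesis unfolding \<psi>_def
      by (intro continuous_intros) (auto intro: continuous_on_compose2)
  qed
  have hb: "\<psi> b \<ge> 1/2" using half phi[of b] Bp unfolding n_def by simp
  obtain x where x: "0 \<le> x" "x \<le> b" "\<psi> x = 1/2"
    using IVT'[of \<psi> 0 "1/2" b] \<psi>0 hb Bp cont by auto
  have xpos: "x > 0" using x \<psi>0 by (cases "x = 0") auto
  have P: "x > 0 \<and> solv_prob V E (inverse (1 + x / real (card V))) = 1/2"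
    using xpos x phi[of x] unfolding n_def by simp
  have uniq: "\<exists>!y. y > 0 \<and> solv_prob V E (inverse (1 + y / real (card V))) = 1/2"
  proof (rule ex1I[of _ x])
    show "x > 0 \<and> solv_prob V E (inverse (1 + x / real (card V))) = 1/2" by (rule P)
    fix y assume y: "y > 0 \<and> solv_prob V E (inverse (1 + y / real (card V))) = 1/2"
    then have "\<psi> y = 1/2" using phi[of y] unfolding n_def by simp
    then show "y = x" using \<psi>mono[of x y] \<psi>mono[of y x] x xpos y
      by (cases x y rule: linorder_cases) auto
  qed
  have "geom_threshold V E = x" unfolding geom_threshold_def by (rule the1_equality[OF uniq P])
  then show ?thesis using x by simp
qed



lemma ln1p_le:
  fixes y :: real assumes y: "y \<ge> 0"
  shows "ln (1 + y) \<le> 4 * sqrt (sqrt y)"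
proof -
  define u where "u = sqrt (sqrt y)"
  have u0: "u \<ge> 0" unfolding u_def using y by simp
  have "u ^ 4 = (u ^ 2) ^ 2" by (simp flip: power_mult)
  also have "u ^ 2 = sqrt y" unfolding u_def using y by simp
  also have "sqrt y ^ 2 = y" using y by simp
  finally have u: "u \<ge> 0" "u ^ 4 = y" using u0 by auto
  have "1 + y \<le> (1 + u) ^ 4"
  proof -
    have "(1 + u) ^ 4 = 1 + 4 * u + 6 * u^2 + 4 * u^3 + u^4" by (simp add: power2_eq_square power3_eq_cube power4_eq_xxxx algebra_simps)
    then show ?thesis using u by (simp add: zero_le_power)
  qed
  also have "\<dots> \<le> exp u ^ 4" using u exp_ge_add_one_self[of u] by (intro power_mono) auto
  also have "\<dots> = exp (4 * u)" by (simp add: exp_of_nat_mult[symmetric])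
  finally have "1 + y \<le> exp (4 * u)" .
  then have "ln (1 + y) \<le> ln (exp (4 * u))" using y by (intro ln_mono) auto
  then show ?thesis unfolding u_def by simp
qed

lemma sum_nat_real: "(\<Sum>j<m. real j) = real m * (real m - 1) / 2"
  by (induction m) (auto simp: field_simps)

lemma lnP:
  fixes m :: nat assumes m: "m \<ge> 1"
  shows "ln (\<Prod>j<m. 1 + 2 ^ j / real m) \<le>
           ln 2 * (real m * (real m - 1) / 2) - real m * ln (real m)
           + 4 * sqrt (sqrt (real m)) / (1 - 1 / sqrt (sqrt 2))"
proof -
  define r :: real where "r = 1 / sqrt (sqrt 2)"
  have r: "0 < r" "r < 1" unfolding r_def by auto
  have mpos: "real m > 0" using m by simp
  have "ln (\<Prod>j<m. 1 + 2 ^ j / real m) = (\<Sum>j<m. ln (1 + 2 ^ j / real m))"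
  proof (rule ln_prod)
    fix j :: nat
    have "0 < 1 + 2 ^ j / real m" using mpos by (simp add: add_pos_nonneg)
    then show "1 + 2 ^ j / real m \<noteq> 0" by linarith
  qed simp
  also have "\<dots> \<le> (\<Sum>j<m. real j * ln 2 - ln (real m) + 4 * sqrt (sqrt (real m)) * r ^ j)"
  proof (rule sum_mono)
    fix j assume "j \<in> {..<m}"
    have eq: "1 + 2 ^ j / real m = (2 ^ j / real m) * (1 + real m / 2 ^ j)"
      using mpos by (simp add: field_simps)
    have "ln (1 + 2 ^ j / real m) = real j * ln 2 - ln (real m) + ln (1 + real m / 2 ^ j)"
    proof -
      have "0 < 1 + real m / 2 ^ j" using mpos by (simp add: add_pos_nonneg)
      then have "1 + real m / 2 ^ j \<noteq> 0" by linarith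
      then show ?thesis unfolding eq using mpos by (simp add: ln_mult ln_div ln_realpow)
    qed
    also have "ln (1 + real m / 2 ^ j) \<le> 4 * sqrt (sqrt (real m / 2 ^ j))"
      by (rule ln1p_le) simp
    also have "sqrt (sqrt (real m / 2 ^ j)) = sqrt (sqrt (real m)) * r ^ j"
      unfolding r_def by (simp add: real_sqrt_divide real_sqrt_power power_divide)
    finally show "ln (1 + 2 ^ j / real m) \<le> real j * ln 2 - ln (real m) + 4 * sqrt (sqrt (real m)) * r ^ j"
      by simp
  qed
  also have "\<dots> = ln 2 * (\<Sum>j<m. real j) - real m * ln (real m) + 4 * sqrt (sqrt (real m)) * (\<Sum>j<m. r ^ j)"
    by (simp add: sum.distrib sum_subtractf sum_distrib_left sum_distrib_right mult_ac)
  also have "\<dots> \<le> ln 2 * (\<Sum>j<m. real j) - real m * ln (real m) + 4 * sqrt (sqrt (real m)) * (1 / (1 - r))"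
  proof -
    have "(\<Sum>j<m. r ^ j) = (1 - r ^ m) / (1 - r)" using r by (simp add: sum_gp_strict)
    also have "\<dots> \<le> 1 / (1 - r)" using r by (intro divide_right_mono) auto
    finally have "(\<Sum>j<m. r ^ j) \<le> 1 / (1 - r)" .
    then show ?thesis by (intro add_left_mono mult_left_mono) auto
  qed
  finally show ?thesis unfolding sum_nat_real r_def by simp
qed

lemma T2_bound:
  fixes L :: real and m :: nat
  defines "S \<equiv> sqrt (2 * L)"
  defines "a \<equiv> L powr (-1/4)"
  defines "t \<equiv> 2 powr S * exp 1 / (2 * sqrt L) * inverse (1 - a)"
  defines "q \<equiv> inverse (1 + t)"
  assumes L: "L \<ge> 16" and mdef: "m = nat \<lfloor>S\<rfloor>"
    and E2: "ln 2 / 2 + 1 + ln 4 + 4 / (1 - 1 / sqrt (sqrt 2)) * sqrt (sqrt (sqrt (2 * L)))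
               \<le> (sqrt (2 * L) - 1) * L powr (-1/4)"
  shows "2 powr L * (exp (real m) * (\<Prod>j<m. q * (1 + 2 ^ j / real m))) \<le> 1/4"
proof -
  define C :: real where "C = 4 / (1 - 1 / sqrt (sqrt 2))"
  have S2: "S ^ 2 = 2 * L" unfolding S_def using L by simp
  have Spos: "S > 0" unfolding S_def using L by simp
  have "S \<ge> sqrt 32" unfolding S_def using L by simp
  moreover have "sqrt 32 \<ge> (2::real)" by (simp add: real_le_rsqrt)
  ultimately have S2': "S \<ge> 2" by linarith
  have mS: "real m \<le> S" "S < real m + 1" unfolding mdef using Spos
    by (simp_all add: of_nat_floor)
  have m1: "real m \<ge> 1" using mS S2' by linarith
  have a01: "0 < a" "a < 1" unfolding a_def using L by (auto intro: powr_less_one)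
  have tpos: "t > 0" unfolding t_def using a01 L by simp
  have qpos: "q > 0" unfolding q_def using tpos by simp
  have lnq: "ln q \<le> - ln t" unfolding q_def using tpos by (simp add: ln_inverse)
  have lnS: "ln L = 2 * ln S - ln 2"
  proof -
    have "ln (S ^ 2) = ln (2 * L)" using S2 by simp
    then show ?thesis using Spos L by (simp add: ln_realpow ln_mult)
  qed
  have lnt: "ln t = S * ln 2 + 1 - ln 2 - ln L / 2 - ln (1 - a)"
    unfolding t_def using a01 L
    by (simp add: ln_mult ln_div ln_inverse ln_sqrt)
  define P where "P = (\<Prod>j<m. 1 + 2 ^ j / real m)"
  have Ppos: "P > 0" unfolding P_def using m1 by (intro prod_pos) (auto simp: add_pos_nonneg)
  have lnP': "ln P \<le> ln 2 * (real m * (real m - 1) / 2) - real m * ln (real m) + C * sqrt (sqrt (real m))"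
    using lnP[of m] m1 unfolding P_def C_def by simp
  have prodq: "(\<Prod>j<m. q * (1 + 2 ^ j / real m)) = q ^ m * P"
    unfolding P_def by (simp add: prod.distrib)
  define T where "T = 2 powr L * (exp (real m) * (q ^ m * P))"
  have Tpos: "T > 0" unfolding T_def using qpos Ppos by simp
  have lnT: "ln T = L * ln 2 + real m + real m * ln q + ln P"
    unfolding T_def using qpos Ppos by (simp add: ln_mult ln_realpow)
  have "ln T \<le> L * ln 2 + real m - real m * ln t + ln P"
  proof -
    have "real m * ln q \<le> real m * (- ln t)" by (rule mult_left_mono[OF lnq]) simp
    then show ?thesis unfolding lnT by simp
  qed
  also have "\<dots> \<le> L * ln 2 + real m - real m * ln t +
      (ln 2 * (real m * (real m - 1) / 2) - real m * ln (real m) + C * sqrt (sqrt (real m)))"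
    using lnP' by simp
  also have "\<dots> = ln 2 * ((S - real m) ^ 2 / 2) + real m * (ln S - ln (real m)) + real m * ln (1 - a) + C * sqrt (sqrt (real m))"
  proof -
    have L2: "L * ln 2 = S ^ 2 / 2 * ln 2" using S2 by simp
    show ?thesis unfolding lnt lnS L2 by (simp add: field_simps power2_eq_square)
  qed
  also have "\<dots> \<le> ln 2 / 2 + 1 - (S - 1) * a + C * sqrt (sqrt (sqrt (2 * L)))"
  proof -
    have "(S - real m) ^ 2 \<le> 1" using mS by (simp add: power_le_one)
    then have t1: "ln 2 * ((S - real m) ^ 2 / 2) \<le> ln 2 / 2" by simp
    have "ln S - ln (real m) = ln (S / real m)" using Spos m1 by (simp add: ln_div)
    also have "\<dots> \<le> S / real m - 1" using Spos m1 by (intro ln_le_minus_one) simp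
    finally have "real m * (ln S - ln (real m)) \<le> real m * (S / real m - 1)"
      using m1 by (intro mult_left_mono) auto
    also have "\<dots> = S - real m" using m1 by (simp add: field_simps)
    finally have t2: "real m * (ln S - ln (real m)) \<le> 1" using mS by linarith
    have "ln (1 - a) \<le> (1 - a) - 1" using a01 by (intro ln_le_minus_one) simp
    then have "real m * ln (1 - a) \<le> real m * (- a)" using m1 by (intro mult_left_mono) auto
    also have "real m * (- a) \<le> (S - 1) * (- a)" using mS a01 by (intro mult_right_mono_neg) auto
    finally have t3: "real m * ln (1 - a) \<le> - ((S - 1) * a)" by simp
    have "sqrt (sqrt (real m)) \<le> sqrt (sqrt S)" using mS by simp
    moreover have "C \<ge> 0" unfolding C_def by (simp add: field_simps)
    ultimately have t4: "C * sqrt (sqrt (real m)) \<le> C * sqrt (sqrt (sqrt (2 * L)))"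
      unfolding S_def by (intro mult_left_mono) auto
    show ?thesis using t1 t2 t3 t4 by linarith
  qed
  also have "\<dots> \<le> - ln 4" using E2 unfolding C_def a_def S_def by linarith
  finally have "ln T \<le> - ln 4" .
  then have "T \<le> exp (- ln 4)" using Tpos by (metis exp_ln exp_le_cancel_iff)
  also have "\<dots> = 1/4" by (simp add: exp_minus)
  finally show ?thesis unfolding T_def prodq .
qed

lemma T1_bound:
  fixes L :: real and m Nn :: nat
  defines "S \<equiv> sqrt (2 * L)"
  defines "a \<equiv> L powr (-1/4)"
  defines "t \<equiv> 2 powr S * exp 1 / (2 * sqrt L) * inverse (1 - a)"
  defines "q \<equiv> inverse (1 + t)"
  assumes L: "L \<ge> 16" and mdef: "m = nat \<lfloor>S\<rfloor>"
    and E3: "2 \<le> 2 powr L * exp (- sqrt L)" and N: "real Nn = 2 powr L"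
  shows "(1 - (1 - q) ^ (2 ^ (m - 2))) ^ Nn \<le> 1/4"
proof -
  have Spos: "S > 0" unfolding S_def using L by simp
  have "S \<ge> sqrt 32" unfolding S_def using L by simp
  moreover have "sqrt 32 \<ge> (2::real)" by (simp add: real_le_rsqrt)
  ultimately have S2': "S \<ge> 2" by linarith
  have mS: "real m \<le> S" "S < real m + 1" unfolding mdef using Spos
    by (simp_all add: of_nat_floor)
  have m2: "m \<ge> 2" using mS S2' by linarith
  have a01: "0 < a" "a < 1" unfolding a_def using L by (auto intro: powr_less_one)
  have sL: "sqrt L > 0" using L by simp
  define t0 where "t0 = 2 powr S / (2 * sqrt L)"
  have t0pos: "t0 > 0" unfolding t0_def using sL by simp
  have tt0: "t \<ge> t0"
  proof -
    have "t = t0 * (exp 1 * inverse (1 - a))" unfolding t_def t0_def by (simp add: field_simps)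
    moreover have "exp 1 * inverse (1 - a) \<ge> 1 * 1"
      using a01 by (intro mult_mono) (auto simp: field_simps)
    ultimately show ?thesis using t0pos by (simp add: mult_le_cancel_left1)
  qed
  have tpos: "t > 0" using tt0 t0pos by linarith
  define K :: nat where "K = 2 ^ (m - 2)"
  have Kb: "real K \<le> 2 powr S / 4"
  proof -
    have mm: "m - 2 + 2 = m" using m2 by simp
    have e: "(2::real) ^ (m - 2) * 2 ^ 2 = 2 ^ m" unfolding power_add[symmetric] mm ..
    have "real K * 4 = 2 ^ m" unfolding K_def using e by simp
    also have "(2::real) ^ m = 2 powr real m" by (simp add: powr_realpow)
    also have "\<dots> \<le> 2 powr S" using mS by (intro powr_mono) auto
    finally show ?thesis by simp
  qed
  have Kt: "real K / t \<le> sqrt L"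
  proof -
    have "real K / t \<le> real K / t0" using tt0 t0pos by (intro divide_left_mono) auto
    also have "\<dots> \<le> (2 powr S / 4) / t0" using Kb t0pos by (intro divide_right_mono) auto
    also have "\<dots> = sqrt L / 2" unfolding t0_def using sL by (simp add: field_simps)
    finally show ?thesis using sL by linarith
  qed
  have q1: "1 - q = inverse (1 + 1 / t)" unfolding q_def using tpos by (simp add: field_simps)
  have q1pos: "1 - q > 0" unfolding q1 using tpos by (simp add: add_pos_pos)
  have lnq1: "ln (1 - q) \<ge> - (1 / t)"
    unfolding q1 using ln_add_one_self_le_self[of "1 / t"] tpos by (simp add: ln_inverse)
  define x where "x = (1 - q) ^ K"
  have xlow: "x \<ge> exp (- sqrt L)"
  proof -
    have "x = exp (real K * ln (1 - q))" unfolding x_def using q1pos by (simp add: exp_ln ln_realpow[symmetric])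
    moreover have "real K * ln (1 - q) \<ge> real K * (- (1 / t))" by (intro mult_left_mono lnq1) simp
    moreover have "real K * (- (1 / t)) = - (real K / t)" by simp
    ultimately have "x \<ge> exp (- (real K / t))" by simp
    moreover have "exp (- (real K / t)) \<ge> exp (- sqrt L)" using Kt by simp
    ultimately show ?thesis by linarith
  qed
  have x1: "x \<le> 1"
  proof -
    have "1 - q \<le> 1" using q_def tpos by simp
    then show ?thesis unfolding x_def using q1pos by (simp add: power_le_one)
  qed
  have "(1 - x) ^ Nn \<le> exp (- x) ^ Nn"
    using x1 exp_ge_add_one_self[of "- x"] by (intro power_mono) auto
  also have "\<dots> = exp (- (real Nn * x))" by (simp add: exp_of_nat_mult[symmetric])
  also have "\<dots> \<le> exp (- 2)"
  proof -
    have "real Nn * x \<ge> 2 powr L * exp (- sqrt L)" unfolding N using xlow by (intro mult_left_mono) auto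
    then show ?thesis using E3 by simp
  qed
  also have "\<dots> \<le> 1/4"
  proof -
    have "exp (1::real) \<ge> 2" using exp_ge_add_one_self[of 1] by simp
    then have "exp (1::real) ^ 2 \<ge> (2::real) ^ 2" by (intro power_mono) auto
    moreover have "exp (2::real) = exp 1 ^ 2" using exp_of_nat_mult[of 2 "1::real"] by simp
    ultimately have "exp (2::real) \<ge> 4" by simp
    then show ?thesis by (simp add: exp_minus field_simps)
  qed
  finally show ?thesis unfolding x_def K_def .
qed


theorem theorem25:
  "\<exists>n0::nat. n0 \<ge> 3 \<and>
    (\<forall>(V::nat set) (E::nat \<Rightarrow> nat \<Rightarrow> bool).
       simple_graph V E \<and> connected_graph V E \<and> card V \<ge> n0 \<longrightarrow>
       (let n = real (card V); L = log 2 n in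
        geom_threshold V E \<le>
          (2 powr sqrt (2 * L) * exp 1 / (2 * sqrt L)) *
          inverse (1 - L powr (-1/4)) * n))"
proof -
  have ev1: "eventually (\<lambda>L::real. ln 2 / 2 + 1 + ln 4 + 4 / (1 - 1 / sqrt (sqrt 2)) * sqrt (sqrt (sqrt (2 * L))) \<le> (sqrt (2 * L) - 1) * L powr (-1/4)) at_top"
    by real_asymp
  have ev2: "eventually (\<lambda>L::real. 2 \<le> 2 powr L * exp (- sqrt L)) at_top"
    by real_asymp
  have ev3: "eventually (\<lambda>L::real. L \<ge> 16) at_top" by (rule eventually_ge_at_top)
  have "eventually (\<lambda>L::real. (ln 2 / 2 + 1 + ln 4 + 4 / (1 - 1 / sqrt (sqrt 2)) * sqrt (sqrt (sqrt (2 * L))) \<le> (sqrt (2 * L) - 1) * L powr (-1/4))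
      \<and> 2 \<le> 2 powr L * exp (- sqrt L) \<and> L \<ge> 16) at_top"
    by (intro eventually_conj ev1 ev2 ev3)
  then obtain L0 where L0: "\<And>L. L \<ge> L0 \<Longrightarrow>
      (ln 2 / 2 + 1 + ln 4 + 4 / (1 - 1 / sqrt (sqrt 2)) * sqrt (sqrt (sqrt (2 * L))) \<le> (sqrt (2 * L) - 1) * L powr (-1/4))
      \<and> 2 \<le> 2 powr L * exp (- sqrt L) \<and> L \<ge> 16"
    unfolding eventually_at_top_linorder by blast
  define n0 where "n0 = max 3 (nat \<lceil>2 powr L0\<rceil>)"
  show ?thesis
  proof (intro exI[of _ n0] conjI allI impI)
    show "3 \<le> n0" unfolding n0_def by simp
    fix V :: "nat set" and E :: "nat \<Rightarrow> nat \<Rightarrow> bool"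
    assume H: "simple_graph V E \<and> connected_graph V E \<and> n0 \<le> card V"
    then have G: "simple_graph V E" "connected_graph V E" and cV: "n0 \<le> card V" by auto
    define N where "N = real (card V)"
    define L where "L = log 2 N"
    have N3: "N \<ge> 3" unfolding N_def using cV unfolding n0_def by simp
    have NL0: "N \<ge> 2 powr L0"
    proof -
      have "2 powr L0 \<le> real (nat \<lceil>2 powr L0\<rceil>)" by linarith
      also have "\<dots> \<le> N"
      proof -
        have "nat \<lceil>2 powr L0\<rceil> \<le> card V" using cV unfolding n0_def by simp
        then have "real (nat \<lceil>2 powr L0\<rceil>) \<le> real (card V)" by (simp only: of_nat_le_iff)
        then show ?thesis unfolding N_def .
      qed
      finally show ?thesis .
    qed
    have NL: "N = 2 powr L" unfolding L_def using N3 by simp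
    have LL0: "L \<ge> L0"
    proof -
      have "log 2 (2 powr L0) \<le> log 2 N" using NL0 N3 by (subst log_le_cancel_iff) auto
      then show ?thesis unfolding L_def by simp
    qed
    note LP = L0[OF LL0]
    have L16: "L \<ge> 16" using LP by blast
    define S where "S = sqrt (2 * L)"
    define a where "a = L powr (-1/4)"
    define t where "t = 2 powr S * exp 1 / (2 * sqrt L) * inverse (1 - a)"
    define q where "q = inverse (1 + t)"
    define m where "m = nat \<lfloor>S\<rfloor>"
    have a01: "0 < a" "a < 1" unfolding a_def using L16 by (auto intro: powr_less_one)
    have tpos: "t > 0" unfolding t_def using a01 L16 by simp
    have q01: "0 < q" "q \<le> 1" unfolding q_def using tpos by (auto simp: field_simps)
    have Spos: "S \<ge> sqrt 32" unfolding S_def using L16 by simp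
    moreover have "sqrt 32 \<ge> (2::real)" by (simp add: real_le_rsqrt)
    ultimately have S2: "S \<ge> 2" by linarith
    have m2: "m \<ge> 2" unfolding m_def using S2 by linarith
    have Vne: "V \<noteq> {}" using N3 unfolding N_def by auto
    define b where "b = t * N"
    have bpos: "b > 0" unfolding b_def using tpos N3 by simp
    have bN: "b / real (card V) = t" unfolding b_def N_def[symmetric] using N3 by simp
    have T1: "(1 - (1 - q) ^ (2 ^ (m - 2))) ^ card V \<le> 1/4"
      unfolding q_def t_def a_def S_def m_def
      by (rule T1_bound) (use LP NL N_def in auto)
    have T2: "2 powr L * (exp (real m) * (\<Prod>j<m. q * (1 + 2 ^ j / real m))) \<le> 1/4"
      unfolding q_def t_def a_def S_def m_def
      by (rule T2_bound) (use LP in auto)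
    have "1 - solv_prob V E q \<le> (1 - (1 - q) ^ (2 ^ (m - 2))) ^ card V
           + real (card V) * (exp (real m) * (\<Prod>j<m. q * (1 + 2 ^ j / m)))"
      by (rule fail_bound[OF G q01 m2])
    also have "real (card V) = 2 powr L" using NL N_def by simp
    finally have "1 - solv_prob V E q \<le> 1/2" using T1 T2 by linarith
    then have half: "solv_prob V E (inverse (1 + b / real (card V))) \<ge> 1/2"
      unfolding bN q_def[symmetric] by linarith
    have "geom_threshold V E \<le> b" by (rule threshold_le[OF G Vne bpos half])
    then show "let n = real (card V); L = log 2 n in
        geom_threshold V E \<le> (2 powr sqrt (2 * L) * exp 1 / (2 * sqrt L)) * inverse (1 - L powr (-1/4)) * n"
      unfolding Let_def b_def t_def S_def a_def L_def N_def by simp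
  qed
qed

end
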